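(* Let $w\in\mathcal W$, $u,\delta\in\mathcal X^*$ with $\|u\|_*\ne0$ and $\|u+\delta\|_*\ne0$, and $\eta>0$. Then $$\Big\langle u,P\Big(w,\frac{u+\delta}{\|u+\delta\|_*},\eta\Big)\Big\rangle\ge\frac14\Big\langle u,P\Big(w,\frac{u}{\|u\|_*},\frac\eta2\Big)\Big\rangle-2\|\delta\|_*.$$
   Context: $(\mathcal X,\|\cdot\|)$ is a reflexive Banach space with dual $(\mathcal X^*,\|\cdot\|_* )$, $\|u\|_*=\sup_{\|x\|\le1}\langle u,x\rangle$, and $\langle\cdot,\cdot\rangle$ the duality pairing. $\mathcal W\subseteq\mathcal X$ is nonempty, closed and convex. Mirror map: $\Phi:\mathcal D\to\mathbb R\cup\{+\infty\}$, $\mathcal D\subseteq\mathcal X$, proper, weakly lower semicontinuous, $1$-strongly convex on $\mathcal W\subseteq\mathrm{int}(\mathcal D)$ with respect to $\|\cdot\|$, and Gâteaux differentiable on $\mathcal W$. Bregman divergence $D_\Phi(x,y)=\Phi(x)-\Phi(y)-\langle\nabla\Phi(y),x-y\rangle$. Proximal gradient mapping: for $w\in\mathcal W$, $u\in\mathcal X^*$, $\eta>0$, $P(w,u,\eta)=(w-w^+)/\eta$ where $w^+=\arg\min_{w'\in\mathcal W}\{\langle\eta u,w'\rangle+D_\Phi(w',w)\}$ (this minimizer exists and is unique). *)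

theory Defs
  imports "HOL-Analysis.Analysis"
begin

(* The real Banach space X is a type 'a::banach; its dual X* is the type of
  bounded linear functionals 'a =>L real with the operator norm (which equals
  sup over the unit ball of the pairing). The duality pairing is application. *)

definition reflexive_space :: "'a::banach itself \<Rightarrow> bool" where
  "reflexive_space _ \<longleftrightarrow>
     (\<forall>\<phi> :: ('a \<Rightarrow>\<^sub>L real) \<Rightarrow>\<^sub>L real. \<exists>x::'a. \<forall>f. blinfun_apply \<phi> f = blinfun_apply f x)"

definition weak_open :: "'a::real_normed_vector set \<Rightarrow> bool" where
  "weak_open S \<longleftrightarrow>
     generate_topology {blinfun_apply f -` U | (f :: 'a \<Rightarrow>\<^sub>L real) U. open U} S"

definition weak_closed :: "'a::real_normed_vector set \<Rightarrow> bool" where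
  "weak_closed S \<longleftrightarrow> weak_open (- S)"

definition weakly_lsc_on :: "'a::real_normed_vector set \<Rightarrow> ('a \<Rightarrow> ereal) \<Rightarrow> bool" where
  "weakly_lsc_on D \<Phi> \<longleftrightarrow>
     (\<forall>t::ereal. \<exists>C. weak_closed C \<and> {x \<in> D. \<Phi> x \<le> t} = D \<inter> C)"

definition proper_on :: "'a set \<Rightarrow> ('a \<Rightarrow> ereal) \<Rightarrow> bool" where
  "proper_on D \<Phi> \<longleftrightarrow> (\<exists>x\<in>D. \<Phi> x < \<infinity>) \<and> (\<forall>x\<in>D. \<Phi> x > -\<infinity>)"

definition strongly_convex_on :: "'a::real_normed_vector set \<Rightarrow> ('a \<Rightarrow> ereal) \<Rightarrow> bool" where
  "strongly_convex_on W \<Phi> \<longleftrightarrow>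
     (\<forall>x\<in>W. \<forall>y\<in>W. \<forall>t::real. 0 \<le> t \<and> t \<le> 1 \<longrightarrow>
        \<Phi> ((1 - t) *\<^sub>R x + t *\<^sub>R y)
          \<le> ereal (1 - t) * \<Phi> x + ereal t * \<Phi> y - ereal (t * (1 - t) / 2 * (norm (x - y))\<^sup>2))"

definition has_gateaux_grad :: "('a::real_normed_vector \<Rightarrow> ereal) \<Rightarrow> ('a \<Rightarrow>\<^sub>L real) \<Rightarrow> 'a \<Rightarrow> bool" where
  "has_gateaux_grad \<Phi> g y \<longleftrightarrow>
     \<bar>\<Phi> y\<bar> \<noteq> \<infinity> \<and>
     (\<forall>h. (\<forall>\<^sub>F t in at (0::real). \<bar>\<Phi> (y + t *\<^sub>R h)\<bar> \<noteq> \<infinity>) \<and>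
          ((\<lambda>t. (real_of_ereal (\<Phi> (y + t *\<^sub>R h)) - real_of_ereal (\<Phi> y)) / t)
             \<longlongrightarrow> blinfun_apply g h) (at 0))"

definition mirror_map :: "'a::banach set \<Rightarrow> 'a set \<Rightarrow> ('a \<Rightarrow> ereal) \<Rightarrow> ('a \<Rightarrow> ('a \<Rightarrow>\<^sub>L real)) \<Rightarrow> bool" where
  "mirror_map W D \<Phi> grad \<longleftrightarrow>
     W \<noteq> {} \<and> closed W \<and> convex W \<and> W \<subseteq> interior D \<and>
     proper_on D \<Phi> \<and> weakly_lsc_on D \<Phi> \<and> strongly_convex_on W \<Phi> \<and>
     (\<forall>y\<in>W. has_gateaux_grad \<Phi> (grad y) y)"

definition bregman :: "('a::real_normed_vector \<Rightarrow> ereal) \<Rightarrow> ('a \<Rightarrow> ('a \<Rightarrow>\<^sub>L real)) \<Rightarrow> 'a \<Rightarrow> 'a \<Rightarrow> ereal" where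
  "bregman \<Phi> grad x y = \<Phi> x - \<Phi> y - ereal (blinfun_apply (grad y) (x - y))"

definition prox_step :: "'a::real_normed_vector set \<Rightarrow> ('a \<Rightarrow> ereal) \<Rightarrow> ('a \<Rightarrow> ('a \<Rightarrow>\<^sub>L real))
    \<Rightarrow> 'a \<Rightarrow> ('a \<Rightarrow>\<^sub>L real) \<Rightarrow> real \<Rightarrow> 'a" where
  "prox_step W \<Phi> grad w u \<eta> =
     (THE w'. w' \<in> W \<and> (\<forall>v\<in>W.
        ereal (\<eta> * blinfun_apply u w') + bregman \<Phi> grad w' w
          \<le> ereal (\<eta> * blinfun_apply u v) + bregman \<Phi> grad v w))"

definition prox_grad_map :: "'a::real_normed_vector set \<Rightarrow> ('a \<Rightarrow> ereal) \<Rightarrow> ('a \<Rightarrow> ('a \<Rightarrow>\<^sub>L real))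
    \<Rightarrow> 'a \<Rightarrow> ('a \<Rightarrow>\<^sub>L real) \<Rightarrow> real \<Rightarrow> 'a" where
  "prox_grad_map W \<Phi> grad w u \<eta> = (1 / \<eta>) *\<^sub>R (w - prox_step W \<Phi> grad w u \<eta>)"

end

theory Submission imports Defs begin

lemma weak_open_open: "weak_open S \<Longrightarrow> open S"
  unfolding weak_open_def
proof (induction rule: generate_topology.induct)
  case (Basis s)
  then obtain f U where "s = blinfun_apply (f::'a \<Rightarrow>\<^sub>L real) -` U" "open U" by auto
  then show ?case by (auto intro!: continuous_open_vimage linear_continuous_at blinfun.bounded_linear_right)
qed auto

lemma weak_closed_closed: "weak_closed C \<Longrightarrow> closed C"
  unfolding weak_closed_def closed_def using weak_open_open by blast

lemma mm_fin:
  assumes "mirror_map W D \<Phi> grad" "y \<in> W"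
  shows "\<Phi> y = ereal (real_of_ereal (\<Phi> y))"
  using assms unfolding mirror_map_def has_gateaux_grad_def by (metis ereal_real)

lemma mm_sc:
  assumes mm: "mirror_map W D \<Phi> grad" and x: "x \<in> W" and y: "y \<in> W" and t: "0 \<le> t" "t \<le> 1"
  shows "real_of_ereal (\<Phi> ((1 - t) *\<^sub>R x + t *\<^sub>R y)) \<le> (1 - t) * real_of_ereal (\<Phi> x) + t * real_of_ereal (\<Phi> y) - t * (1 - t) / 2 * (norm (x - y))\<^sup>2"
proof -
  have W: "convex W" using mm unfolding mirror_map_def by auto
  have z: "(1 - t) *\<^sub>R x + t *\<^sub>R y \<in> W" using W x y t by (simp add: convex_def)
  have "\<Phi> ((1 - t) *\<^sub>R x + t *\<^sub>R y) \<le> ereal (1 - t) * \<Phi> x + ereal t * \<Phi> y - ereal (t * (1 - t) / 2 * (norm (x - y))\<^sup>2)"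
    using mm x y t unfolding mirror_map_def strongly_convex_on_def by blast
  then show ?thesis
    apply (subst (asm) mm_fin[OF mm z]) apply (subst (asm) mm_fin[OF mm x]) apply (subst (asm) mm_fin[OF mm y])
    by simp
qed

lemma mm_lsc:
  assumes mm: "mirror_map W D \<Phi> grad" and X: "\<And>n. X n \<in> W" and lim: "X \<longlonglongrightarrow> l" and l: "l \<in> W"
    and le: "\<And>n. real_of_ereal (\<Phi> (X n)) \<le> d n" and d: "d \<longlonglongrightarrow> d0"
  shows "real_of_ereal (\<Phi> l) \<le> d0"
proof (rule field_le_epsilon)
  fix e :: real assume e: "e > 0"
  obtain C where C: "weak_closed C" "{x \<in> D. \<Phi> x \<le> ereal (d0 + e)} = D \<inter> C"
    using mm unfolding mirror_map_def weakly_lsc_on_def by blast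
  have WD: "W \<subseteq> D" using mm interior_subset unfolding mirror_map_def by blast
  have ev: "eventually (\<lambda>n. d n < d0 + e) sequentially"
    using order_tendstoD(2)[OF d] e by simp
  have "eventually (\<lambda>n. X n \<in> C) sequentially"
  proof (rule eventually_mono[OF ev])
    fix n assume "d n < d0 + e"
    then have "\<Phi> (X n) \<le> ereal (d0 + e)" using le[of n] mm_fin[OF mm X[of n]] by (metis ereal_less_eq(3) less_imp_le order.trans)
    then show "X n \<in> C" using C(2) X[of n] WD by blast
  qed
  then have "l \<in> C" using Lim_in_closed_set[OF weak_closed_closed[OF C(1)] _ _ lim] by simp
  then have "\<Phi> l \<le> ereal (d0 + e)" using C(2) l WD by blast
  then show "real_of_ereal (\<Phi> l) \<le> d0 + e" using mm_fin[OF mm l] by (metis ereal_less_eq(3))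
qed

definition sconv :: "'a::real_normed_vector set \<Rightarrow> ('a \<Rightarrow> real) \<Rightarrow> bool" where
  "sconv W F \<longleftrightarrow> (\<forall>x\<in>W. \<forall>y\<in>W. \<forall>t. 0 \<le> t \<and> t \<le> 1 \<longrightarrow>
     (1 - t) *\<^sub>R x + t *\<^sub>R y \<in> W \<and>
     F ((1 - t) *\<^sub>R x + t *\<^sub>R y) \<le> (1 - t) * F x + t * F y - t * (1 - t) / 2 * (norm (x - y))\<^sup>2)"

lemma sconvD:
  assumes "sconv W F" "x \<in> W" "y \<in> W" "0 \<le> t" "t \<le> 1"
  shows "(1 - t) *\<^sub>R x + t *\<^sub>R y \<in> W"
    "F ((1 - t) *\<^sub>R x + t *\<^sub>R y) \<le> (1 - t) * F x + t * F y - t * (1 - t) / 2 * (norm (x - y))\<^sup>2"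
  using assms unfolding sconv_def by blast+

lemma quad_growth:
  assumes sc: "sconv W F" and x: "x \<in> W" and min: "\<forall>v\<in>W. F x \<le> F v" and v: "v \<in> W"
  shows "F v \<ge> F x + 1/2 * (norm (v - x))\<^sup>2"
proof -
  define a where "a = F v - F x"
  define b where "b = (norm (v - x))\<^sup>2 / 2"
  have key: "a \<ge> (1 - t) * b" if t: "0 < t" "t \<le> 1" for t
  proof -
    have "F x \<le> F ((1 - t) *\<^sub>R x + t *\<^sub>R v)" using sc x v t min unfolding sconv_def by auto
    also have "\<dots> \<le> (1 - t) * F x + t * F v - t * (1 - t) / 2 * (norm (x - v))\<^sup>2"
      using sc x v t unfolding sconv_def by auto
    finally have "t * F x \<le> t * F v - t * ((1 - t) / 2 * (norm (x - v))\<^sup>2)" by (simp add: algebra_simps)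
    then have "t * ((1 - t) / 2 * (norm (x - v))\<^sup>2) \<le> t * (F v - F x)" by (simp add: algebra_simps)
    then have "(1 - t) / 2 * (norm (x - v))\<^sup>2 \<le> F v - F x" using t by simp
    then show ?thesis unfolding a_def b_def by (simp add: norm_minus_commute)
  qed
  have b0: "b \<ge> 0" unfolding b_def by simp
  have "a \<ge> b"
  proof (rule ccontr)
    assume "\<not> a \<ge> b"
    then have ab: "a < b" by simp
    have "a \<ge> 0" using key[of 1] by simp
    then have bp: "b > 0" using ab by simp
    define t where "t = (b - a) / (2 * b)"
    have "t > 0" "t \<le> 1" using ab bp \<open>a \<ge> 0\<close> unfolding t_def by (auto simp: field_simps)
    then have "a \<ge> (1 - t) * b" by (rule key)
    also have "(1 - t) * b = (a + b) / 2" using bp unfolding t_def by (simp add: field_simps)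
    finally show False using ab by simp
  qed
  then show ?thesis unfolding a_def b_def by simp
qed

lemma exists_min:
  fixes F :: "'a::banach \<Rightarrow> real"
  assumes sc: "sconv W F" and cl: "closed W" and ne: "W \<noteq> {}" and bdd: "\<And>v. v \<in> W \<Longrightarrow> B \<le> F v"
    and lsc: "\<And>X l c c0. (\<And>n. X n \<in> W) \<Longrightarrow> X \<longlonglongrightarrow> l \<Longrightarrow> l \<in> W \<Longrightarrow> (\<And>n. F (X n) \<le> c n) \<Longrightarrow> c \<longlonglongrightarrow> c0 \<Longrightarrow> F l \<le> c0"
  shows "\<exists>x\<in>W. \<forall>v\<in>W. F x \<le> F v"
proof -
  define m where "m = Inf (F ` W)"
  have bb: "bdd_below (F ` W)" using bdd by (meson bdd_below.I2)
  have mle: "m \<le> F v" if "v \<in> W" for v unfolding m_def using bb that by (simp add: cInf_lower)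
  have "\<exists>x\<in>W. F x < m + 1 / (real n + 1)" for n
  proof -
    have "Inf (F ` W) < m + 1 / (real n + 1)" unfolding m_def by simp
    then show ?thesis using cInf_lessD[of "F ` W"] ne by blast
  qed
  then obtain X where X: "\<And>n. X n \<in> W" "\<And>n. F (X n) < m + 1 / (real n + 1)" by metis
  have dist: "(norm (X n - X k))\<^sup>2 \<le> 4 * (1 / (real n + 1) + 1 / (real k + 1))" for n k
  proof -
    have memb: "(1 - t) *\<^sub>R x + t *\<^sub>R y \<in> W" if "x\<in>W" "y\<in>W" "0\<le>t" "t\<le>1" for x y t
      using sc that unfolding sconv_def by blast
    have "m \<le> F ((1 - 1/2) *\<^sub>R X n + (1/2) *\<^sub>R X k)" by (rule mle[OF memb[OF X(1) X(1)]]) auto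
    also have "\<dots> \<le> (1 - 1/2) * F (X n) + (1/2) * F (X k) - (1/2) * (1 - 1/2) / 2 * (norm (X n - X k))\<^sup>2"
      by (rule sconvD(2)[OF sc X(1) X(1)]) auto
    finally show ?thesis using X(2)[of n] X(2)[of k] by simp
  qed
  have "Cauchy X"
  proof (rule metric_CauchyI)
    fix e :: real assume e: "e > 0"
    obtain M :: nat where M: "8 / e\<^sup>2 < real M" using reals_Archimedean2 by blast
    have "dist (X n) (X k) < e" if "n \<ge> M" "k \<ge> M" for n k
    proof -
      have e2: "e\<^sup>2 > 0" using e by simp
      have "1 / (real n + 1) \<le> 1 / (real M + 1)" "1 / (real k + 1) \<le> 1 / (real M + 1)"
        using that by (auto simp: field_simps)
      then have nk: "(norm (X n - X k))\<^sup>2 \<le> 8 / (real M + 1)" using dist[of n k] by simp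
      have M': "8 < real M * e\<^sup>2" using M e2 by (simp add: field_simps)
      have "8 < real M * e\<^sup>2 + e\<^sup>2" using M' e2 by linarith
      then have "8 < e\<^sup>2 * (real M + 1)" by (simp add: algebra_simps)
      then have "8 / (real M + 1) < e\<^sup>2" by (simp add: divide_less_eq)
      then have "(norm (X n - X k))\<^sup>2 < e\<^sup>2" using nk by linarith
      then have "norm (X n - X k) < e" using e by (simp add: power_less_imp_less_base)
      then show ?thesis by (simp add: dist_norm)
    qed
    then show "\<exists>M. \<forall>m\<ge>M. \<forall>n\<ge>M. dist (X m) (X n) < e" by blast
  qed
  then obtain l where l: "X \<longlonglongrightarrow> l" using Cauchy_convergent_iff convergent_def by blast
  have lW: "l \<in> W" using Lim_in_closed_set[OF cl _ _ l] X(1) by simp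
  have c: "(\<lambda>n. m + 1 / (real n + 1)) \<longlonglongrightarrow> m"
    using tendsto_add[OF tendsto_const LIMSEQ_inverse_real_of_nat_add[of 0]] by (simp add: inverse_eq_divide add.commute)
  have "F l \<le> m" using lsc[OF X(1) l lW _ c] X(2) less_imp_le by blast
  then show ?thesis using lW mle by force
qed


lemma hh_lower:
  assumes mm: "mirror_map W D \<Phi> grad" and w: "w \<in> W" and v: "v \<in> W"
  shows "real_of_ereal (\<Phi> v) - real_of_ereal (\<Phi> w) - blinfun_apply (grad w) (v - w) \<ge> 1/2 * (norm (v - w))\<^sup>2"
proof -
  let ?\<phi> = "\<lambda>x. real_of_ereal (\<Phi> x)"
  define k where "k = v - w"
  define H where "H = ?\<phi> v - ?\<phi> w - blinfun_apply (grad w) k"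
  have gat: "((\<lambda>t. (?\<phi> (w + t *\<^sub>R k) - ?\<phi> w) / t) \<longlongrightarrow> blinfun_apply (grad w) k) (at 0)"
    using mm w unfolding mirror_map_def has_gateaux_grad_def by blast
  then have gat': "((\<lambda>t. (?\<phi> (w + t *\<^sub>R k) - ?\<phi> w) / t) \<longlongrightarrow> blinfun_apply (grad w) k) (at_right 0)"
    by (rule filterlim_mono) (simp_all add: at_le)
  have L: "((\<lambda>t. (?\<phi> (w + t *\<^sub>R k) - ?\<phi> w) / t - blinfun_apply (grad w) k) \<longlongrightarrow> 0) (at_right 0)"
    using tendsto_diff[OF gat' tendsto_const[of "blinfun_apply (grad w) k"]] by simp
  have R: "((\<lambda>t. H - (1 - t) / 2 * (norm k)\<^sup>2) \<longlongrightarrow> H - (1 - 0) / 2 * (norm k)\<^sup>2) (at_right 0)"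
    by (intro tendsto_intros) auto
  have ev: "eventually (\<lambda>t. (?\<phi> (w + t *\<^sub>R k) - ?\<phi> w) / t - blinfun_apply (grad w) k \<le> H - (1 - t) / 2 * (norm k)\<^sup>2) (at_right 0)"
    unfolding eventually_at_right_field
  proof (intro exI[of _ 1] conjI allI impI)
    fix t :: real assume t: "0 < t" "t < 1"
    have eq: "(1 - t) *\<^sub>R w + t *\<^sub>R v = w + t *\<^sub>R k" unfolding k_def by (simp add: algebra_simps)
    have "?\<phi> (w + t *\<^sub>R k) \<le> (1 - t) * ?\<phi> w + t * ?\<phi> v - t * (1 - t) / 2 * (norm (w - v))\<^sup>2"
      using mm_sc[OF mm w v, of t] t eq by simp
    then have "?\<phi> (w + t *\<^sub>R k) - ?\<phi> w \<le> t * ((?\<phi> v - ?\<phi> w) - (1 - t) / 2 * (norm k)\<^sup>2)"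
      unfolding k_def by (simp add: algebra_simps norm_minus_commute)
    then have "(?\<phi> (w + t *\<^sub>R k) - ?\<phi> w) / t \<le> (?\<phi> v - ?\<phi> w) - (1 - t) / 2 * (norm k)\<^sup>2"
      using t by (simp add: divide_le_eq mult.commute)
    then show "(?\<phi> (w + t *\<^sub>R k) - ?\<phi> w) / t - blinfun_apply (grad w) k \<le> H - (1 - t) / 2 * (norm k)\<^sup>2"
      unfolding H_def by simp
  qed simp
  have "0 \<le> H - (1 - 0) / 2 * (norm k)\<^sup>2"
    by (rule tendsto_le[OF trivial_limit_at_right_real R L ev])
  then show ?thesis unfolding H_def k_def by simp
qed


lemma prox_char:
  assumes mm: "mirror_map W D \<Phi> grad" and w: "w \<in> W" and eta: "\<eta> > 0"
  shows "prox_step W \<Phi> grad w g \<eta> \<in> W \<and> (\<forall>v\<in>W.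
     \<eta> * blinfun_apply g v + (real_of_ereal (\<Phi> v) - real_of_ereal (\<Phi> w) - blinfun_apply (grad w) (v - w))
     \<ge> \<eta> * blinfun_apply g (prox_step W \<Phi> grad w g \<eta>) + (real_of_ereal (\<Phi> (prox_step W \<Phi> grad w g \<eta>)) - real_of_ereal (\<Phi> w) - blinfun_apply (grad w) (prox_step W \<Phi> grad w g \<eta> - w))
       + 1/2 * (norm (v - prox_step W \<Phi> grad w g \<eta>))\<^sup>2)"
proof -
  let ?\<phi> = "\<lambda>x. real_of_ereal (\<Phi> x)"
  define F where "F v = \<eta> * blinfun_apply g v + (?\<phi> v - ?\<phi> w - blinfun_apply (grad w) (v - w))" for v
  have cvx: "convex W" and cl: "closed W" and ne: "W \<noteq> {}" using mm unfolding mirror_map_def by auto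
  have sc: "sconv W F" unfolding sconv_def
  proof (intro ballI allI impI conjI)
    fix x y and t :: real assume x: "x \<in> W" and y: "y \<in> W" and t: "0 \<le> t \<and> t \<le> 1"
    show "(1 - t) *\<^sub>R x + t *\<^sub>R y \<in> W" using cvx x y t by (simp add: convex_def)
    have e1: "(1 - t) *\<^sub>R x + t *\<^sub>R y - w = (1 - t) *\<^sub>R (x - w) + t *\<^sub>R (y - w)" by (simp add: algebra_simps)
    have lin1: "blinfun_apply g ((1 - t) *\<^sub>R x + t *\<^sub>R y) = (1 - t) * blinfun_apply g x + t * blinfun_apply g y"
      by (simp add: blinfun.add_right blinfun.scaleR_right)
    have lin2: "blinfun_apply (grad w) ((1 - t) *\<^sub>R x + t *\<^sub>R y - w) = (1 - t) * blinfun_apply (grad w) (x - w) + t * blinfun_apply (grad w) (y - w)"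
      unfolding e1 by (simp add: blinfun.add_right blinfun.scaleR_right)
    have "?\<phi> ((1 - t) *\<^sub>R x + t *\<^sub>R y) \<le> (1 - t) * ?\<phi> x + t * ?\<phi> y - t * (1 - t) / 2 * (norm (x - y))\<^sup>2"
      using mm_sc[OF mm x y] t by simp
    then show "F ((1 - t) *\<^sub>R x + t *\<^sub>R y) \<le> (1 - t) * F x + t * F y - t * (1 - t) / 2 * (norm (x - y))\<^sup>2"
      unfolding F_def lin1 lin2 by (simp add: algebra_simps)
  qed
  have bdd: "\<eta> * blinfun_apply g w - (\<eta> * norm g)\<^sup>2 / 2 \<le> F v" if v: "v \<in> W" for v
  proof -
    have h: "?\<phi> v - ?\<phi> w - blinfun_apply (grad w) (v - w) \<ge> 1/2 * (norm (v - w))\<^sup>2" by (rule hh_lower[OF mm w v])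
    have "\<bar>blinfun_apply g (v - w)\<bar> \<le> norm g * norm (v - w)" using norm_blinfun[of g "v - w"] by simp
    then have "blinfun_apply g v \<ge> blinfun_apply g w - norm g * norm (v - w)" by (simp add: blinfun.diff_right)
    then have "\<eta> * blinfun_apply g v \<ge> \<eta> * blinfun_apply g w - \<eta> * norm g * norm (v - w)" using eta
      using mult_left_mono[of "blinfun_apply g w - norm g * norm (v - w)" "blinfun_apply g v" \<eta>]
      by (simp add: right_diff_distrib mult.assoc)
    moreover have "0 \<le> (norm (v - w) - \<eta> * norm g)\<^sup>2" by simp
    moreover have "(norm (v - w) - \<eta> * norm g)\<^sup>2 = (norm (v - w))\<^sup>2 - 2 * (\<eta> * norm g * norm (v - w)) + (\<eta> * norm g)\<^sup>2"
      by (simp add: power2_eq_square algebra_simps)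
    ultimately have "\<eta> * blinfun_apply g w - (\<eta> * norm g)\<^sup>2 / 2 \<le> \<eta> * blinfun_apply g v + (?\<phi> v - ?\<phi> w - blinfun_apply (grad w) (v - w))"
      using h by linarith
    then show ?thesis unfolding F_def .
  qed
  have lsc: "F l \<le> c0" if X: "\<And>n. X n \<in> W" and lim: "X \<longlonglongrightarrow> l" and l: "l \<in> W"
    and le: "\<And>n. F (X n) \<le> c n" and c: "c \<longlonglongrightarrow> c0" for X l c c0
  proof -
    define d where "d n = c n - \<eta> * blinfun_apply g (X n) + ?\<phi> w + blinfun_apply (grad w) (X n - w)" for n
    have dl: "d \<longlonglongrightarrow> c0 - \<eta> * blinfun_apply g l + ?\<phi> w + blinfun_apply (grad w) (l - w)"
      unfolding d_def by (intro tendsto_intros c lim blinfun.tendsto[OF tendsto_const])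
    have "?\<phi> (X n) \<le> d n" for n using le[of n] unfolding F_def d_def by simp
    then have "?\<phi> l \<le> c0 - \<eta> * blinfun_apply g l + ?\<phi> w + blinfun_apply (grad w) (l - w)"
      by (rule mm_lsc[OF mm X lim l _ dl])
    then show ?thesis unfolding F_def by simp
  qed
  obtain x0 where x0: "x0 \<in> W" "\<forall>v\<in>W. F x0 \<le> F v"
  proof -
    have "\<exists>x\<in>W. \<forall>v\<in>W. F x \<le> F v"
    proof (rule exists_min[OF sc cl ne])
      show "\<And>v. v \<in> W \<Longrightarrow> \<eta> * blinfun_apply g w - (\<eta> * norm g)\<^sup>2 / 2 \<le> F v" by (rule bdd)
      show "\<And>X l c c0. (\<And>n. X n \<in> W) \<Longrightarrow> X \<longlonglongrightarrow> l \<Longrightarrow> l \<in> W \<Longrightarrow> (\<And>n. F (X n) \<le> c n) \<Longrightarrow> c \<longlonglongrightarrow> c0 \<Longrightarrow> F l \<le> c0"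
        by (rule lsc)
    qed
    then show ?thesis using that by blast
  qed
  have breg: "ereal (\<eta> * blinfun_apply g v) + bregman \<Phi> grad v w = ereal (F v)" if v: "v \<in> W" for v
    unfolding bregman_def F_def by (subst mm_fin[OF mm v], subst mm_fin[OF mm w]) simp
  define P where "P w' = (w' \<in> W \<and> (\<forall>v\<in>W.
        ereal (\<eta> * blinfun_apply g w') + bregman \<Phi> grad w' w
          \<le> ereal (\<eta> * blinfun_apply g v) + bregman \<Phi> grad v w))" for w'
  have Piff: "P w' \<longleftrightarrow> w' \<in> W \<and> (\<forall>v\<in>W. F w' \<le> F v)" for w'
    unfolding P_def using breg by auto
  have ex1: "\<exists>!w'. P w'"
  proof (rule ex1I[of _ x0])
    show "P x0" using Piff x0 by blast
    fix y assume "P y"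
    then have y: "y \<in> W" "\<forall>v\<in>W. F y \<le> F v" using Piff by auto
    have "F x0 \<ge> F y + 1/2 * (norm (x0 - y))\<^sup>2" by (rule quad_growth[OF sc y x0(1)])
    moreover have "F x0 \<le> F y" using x0(2) y(1) by blast
    ultimately have "(norm (x0 - y))\<^sup>2 \<le> 0" by linarith
    then have "norm (x0 - y) = 0" by simp
    then show "y = x0" by simp
  qed
  have ps: "prox_step W \<Phi> grad w g \<eta> = (THE w'. P w')" unfolding prox_step_def P_def by simp
  have "P (prox_step W \<Phi> grad w g \<eta>)" unfolding ps using theI'[OF ex1] .
  then have m: "prox_step W \<Phi> grad w g \<eta> \<in> W" "\<forall>v\<in>W. F (prox_step W \<Phi> grad w g \<eta>) \<le> F v" using Piff by auto
  have "\<forall>v\<in>W. F v \<ge> F (prox_step W \<Phi> grad w g \<eta>) + 1/2 * (norm (v - prox_step W \<Phi> grad w g \<eta>))\<^sup>2"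
    using quad_growth[OF sc m(1) m(2)] by blast
  then show ?thesis using m(1) unfolding F_def by blast
qed

lemma arith_core:
  fixes a1 A B1 B2 d1 d2 H1 H2 r s dd \<eta> :: real
  assumes eta: "\<eta> > 0" and r: "r > 0" and s: "s > 0" and dd: "dd \<ge> 0"
    and rs: "r \<le> s + dd" and sr: "s \<le> r + dd"
    and d1: "d1 \<ge> 0" and d2: "d2 \<ge> 0"
    and B1: "\<bar>B1\<bar> \<le> dd * d1" and B2: "\<bar>B2\<bar> \<le> dd * d2"
    and As: "A \<le> s * d2" and a1B1: "a1 + B1 \<le> r * d1"
    and H1: "H1 \<ge> d1\<^sup>2 / 2" and H2: "H2 \<ge> d2\<^sup>2 / 2"
    and P1w: "\<eta> * (a1 + B1) \<ge> r * (H1 + d1\<^sup>2 / 2)"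
    and P2w: "\<eta> * A \<ge> 2 * s * (H2 + d2\<^sup>2 / 2)"
    and P12: "\<eta> * ((a1 + B1) - (A + B2)) + r * H2 \<ge> r * H1"
  shows "\<eta> * a1 \<ge> \<eta> * A / 2 - 2 * \<eta>\<^sup>2 * dd"
proof -
  have rd1: "r * (H1 + d1\<^sup>2 / 2) \<ge> r * d1\<^sup>2" using mult_left_mono[of "d1\<^sup>2" "H1 + d1\<^sup>2 / 2" r] H1 r by simp
  have "\<eta> * (r * d1) \<ge> r * d1\<^sup>2" using P1w rd1 mult_left_mono[OF a1B1 less_imp_le[OF eta]] by linarith
  then have "r * (d1 * \<eta>) \<ge> r * (d1 * d1)" by (simp add: power2_eq_square algebra_simps)
  then have "d1 * \<eta> \<ge> d1 * d1" using r by simp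
  then have d1e: "d1 \<le> \<eta>" using d1 eta by (cases "d1 = 0") (auto simp: mult_le_cancel_left)
  have sd2: "2 * s * (H2 + d2\<^sup>2 / 2) \<ge> 2 * s * d2\<^sup>2" using mult_left_mono[of "d2\<^sup>2" "H2 + d2\<^sup>2 / 2" "2 * s"] H2 s by simp
  have "\<eta> * (s * d2) \<ge> 2 * s * d2\<^sup>2" using P2w sd2 mult_left_mono[OF As less_imp_le[OF eta]] by linarith
  then have "s * (d2 * \<eta>) \<ge> s * (2 * d2 * d2)" by (simp add: power2_eq_square algebra_simps)
  then have "d2 * \<eta> \<ge> d2 * (2 * d2)" using s by simp
  then have d2e: "2 * d2 \<le> \<eta>" using d2 eta by (cases "d2 = 0") (auto simp: mult_le_cancel_left)
  have "H2 + d2\<^sup>2 / 2 \<ge> 0" using H2 zero_le_power2[of d2] by linarith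
  then have "2 * s * (H2 + d2\<^sup>2 / 2) \<ge> 0" using s by simp
  then have "\<eta> * A \<ge> 0" using P2w by linarith
  then have A0: "A \<ge> 0" using eta by (simp add: zero_le_mult_iff)
  show ?thesis
  proof (cases "dd > r")
    case True
    have "a1 \<ge> - (dd * \<eta>)"
    proof -
      have "H1 + d1\<^sup>2 / 2 \<ge> 0" using H1 zero_le_power2[of d1] by linarith
      then have "r * (H1 + d1\<^sup>2 / 2) \<ge> 0" using r by simp
      then have "\<eta> * (a1 + B1) \<ge> 0" using P1w by linarith
      then have "a1 + B1 \<ge> 0" using eta by (simp add: zero_le_mult_iff)
      moreover have "dd * d1 \<le> dd * \<eta>" using d1e dd by (simp add: mult_left_mono)
      ultimately show ?thesis using B1 by linarith
    qed
    moreover have "A \<le> dd * \<eta>"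
    proof -
      have "s * d2 \<le> (r + dd) * d2" using sr d2 by (simp add: mult_right_mono)
      also have "\<dots> \<le> (2 * dd) * d2" using True d2 by (simp add: mult_right_mono)
      also have "\<dots> \<le> dd * \<eta>" using mult_left_mono[OF d2e dd] by (simp add: mult.commute mult.left_commute)
      finally show ?thesis using As by linarith
    qed
    moreover have "dd * \<eta> \<ge> 0" using dd eta by simp
    ultimately have "a1 \<ge> A / 2 - 2 * (dd * \<eta>)" by linarith
    then have "a1 \<ge> A / 2 - 2 * \<eta> * dd" by (simp add: mult.commute mult.left_commute)
    then have "\<eta> * a1 \<ge> \<eta> * (A / 2 - 2 * \<eta> * dd)" using eta by (simp add: mult_left_mono)
    then show ?thesis by (simp add: power2_eq_square algebra_simps)
  next
    case False
    then have ddr: "dd \<le> r" by simp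
    have S2: "r * H1 \<ge> r * (d1\<^sup>2 / 2)" using H1 r by (simp add: mult_left_mono)
    have H2u: "H2 \<le> (\<eta> * A - s * d2\<^sup>2) / (2 * s)" using P2w s by (simp add: field_simps)
    have S3: "r * H2 \<le> r * ((\<eta> * A - s * d2\<^sup>2) / (2 * s))" using mult_left_mono[OF H2u less_imp_le[OF r]] .
    have S3': "r * ((\<eta> * A - s * d2\<^sup>2) / (2 * s)) = r * \<eta> * (A / s) / 2 - r * d2\<^sup>2 / 2"
      using s by (simp add: field_simps)
    have As': "A / s \<le> d2" using As s by (simp add: field_simps mult.commute)
    have A's: "A / s \<ge> 0" using A0 s by simp
    have S4: "r * \<eta> * (A / s) \<le> \<eta> * A + dd * \<eta> * d2"
    proof -
      have "r * \<eta> * (A / s) \<le> (s + dd) * \<eta> * (A / s)" by (rule mult_right_mono[OF mult_right_mono[OF rs less_imp_le[OF eta]] A's])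
      also have "\<dots> = \<eta> * A + dd * \<eta> * (A / s)" using s by (simp add: field_simps)
      also have "\<dots> \<le> \<eta> * A + dd * \<eta> * d2" using mult_left_mono[OF As' mult_nonneg_nonneg[OF dd less_imp_le[OF eta]]] by simp
      finally show ?thesis .
    qed
    have S5: "r * d1\<^sup>2 \<ge> dd * d1\<^sup>2" "r * d2\<^sup>2 \<ge> dd * d2\<^sup>2" using ddr by (simp_all add: mult_right_mono)
    have b1: "B1 \<le> dd * d1" and b2: "- B2 \<le> dd * d2" using B1 B2 by (simp_all add: abs_le_iff)
    have e1: "\<eta> * B1 \<le> \<eta> * (dd * d1)" "\<eta> * (- B2) \<le> \<eta> * (dd * d2)"
      using mult_left_mono[OF b1 less_imp_le[OF eta]] mult_left_mono[OF b2 less_imp_le[OF eta]] by simp_all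
    have main: "\<eta> * a1 \<ge> \<eta> * A / 2 - dd * (\<eta> * d1 + 3/2 * \<eta> * d2 - d1\<^sup>2 / 2 - d2\<^sup>2 / 2)"
      using P12 S2 S3 S3' S4 S5 e1 by (simp add: algebra_simps)
    have br: "\<eta> * d1 + 3/2 * \<eta> * d2 - d1\<^sup>2 / 2 - d2\<^sup>2 / 2 \<le> 2 * \<eta>\<^sup>2"
    proof -
      have "0 \<le> (d1 - \<eta>)\<^sup>2" by simp
      moreover have "(d1 - \<eta>)\<^sup>2 = d1\<^sup>2 - 2 * (\<eta> * d1) + \<eta>\<^sup>2" by (simp add: power2_eq_square algebra_simps)
      moreover have "\<eta> * d2 \<le> \<eta> * (\<eta> / 2)" using d2e eta by (simp add: mult_left_mono)
      moreover have "\<eta> * (\<eta> / 2) = \<eta>\<^sup>2 / 2" by (simp add: power2_eq_square)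
      moreover have "d2\<^sup>2 \<ge> 0" "\<eta>\<^sup>2 \<ge> 0" by simp_all
      ultimately show ?thesis by linarith
    qed
    have "dd * (\<eta> * d1 + 3/2 * \<eta> * d2 - d1\<^sup>2 / 2 - d2\<^sup>2 / 2) \<le> dd * (2 * \<eta>\<^sup>2)" using br dd by (simp add: mult_left_mono)
    then show ?thesis using main by (simp add: algebra_simps)
  qed
qed

theorem mainTheorem8:
  fixes W D :: "'a::banach set" and \<Phi> :: "'a \<Rightarrow> ereal"
    and grad :: "'a \<Rightarrow> ('a \<Rightarrow>\<^sub>L real)"
    and w :: 'a and u \<delta> :: "'a \<Rightarrow>\<^sub>L real" and \<eta> :: real
  assumes "reflexive_space TYPE('a)"
    and "mirror_map W D \<Phi> grad"
    and "w \<in> W"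
    and "norm u \<noteq> 0" and "norm (u + \<delta>) \<noteq> 0"
    and "\<eta> > 0"
  shows "blinfun_apply u (prox_grad_map W \<Phi> grad w ((1 / norm (u + \<delta>)) *\<^sub>R (u + \<delta>)) \<eta>)
         \<ge> 1/4 * blinfun_apply u (prox_grad_map W \<Phi> grad w ((1 / norm u) *\<^sub>R u) (\<eta> / 2))
           - 2 * norm \<delta>"
proof -
  note mm = assms(2) and w = assms(3) and eta = assms(6)
  let ?\<phi> = "\<lambda>x. real_of_ereal (\<Phi> x)"
  define hh where "hh v = ?\<phi> v - ?\<phi> w - blinfun_apply (grad w) (v - w)" for v
  define r where "r = norm (u + \<delta>)"
  define s where "s = norm u"
  define dd where "dd = norm \<delta>"
  have r: "r > 0" and s: "s > 0" using assms(4,5) unfolding r_def s_def by auto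
  define x1 where "x1 = prox_step W \<Phi> grad w ((1 / r) *\<^sub>R (u + \<delta>)) \<eta>"
  define x2 where "x2 = prox_step W \<Phi> grad w ((1 / s) *\<^sub>R u) (\<eta> / 2)"
  have eta2: "\<eta> / 2 > 0" using eta by simp
  have P1: "x1 \<in> W" "\<And>v. v \<in> W \<Longrightarrow> \<eta> * ((blinfun_apply u v + blinfun_apply \<delta> v) / r) + hh v
      \<ge> \<eta> * ((blinfun_apply u x1 + blinfun_apply \<delta> x1) / r) + hh x1 + 1/2 * (norm (v - x1))\<^sup>2"
    using prox_char[OF mm w eta, of "(1 / r) *\<^sub>R (u + \<delta>)"] unfolding x1_def[symmetric] hh_def
    by (auto simp: blinfun.scaleR_left blinfun.add_left)
  have P2: "x2 \<in> W" "\<And>v. v \<in> W \<Longrightarrow> \<eta> / 2 * (blinfun_apply u v / s) + hh v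
      \<ge> \<eta> / 2 * (blinfun_apply u x2 / s) + hh x2 + 1/2 * (norm (v - x2))\<^sup>2"
    using prox_char[OF mm w eta2, of "(1 / s) *\<^sub>R u"] unfolding x2_def[symmetric] hh_def
    by (auto simp: blinfun.scaleR_left)
  have hw: "hh w = 0" unfolding hh_def by simp
  have H1: "hh x1 \<ge> (norm (w - x1))\<^sup>2 / 2" using hh_lower[OF mm w P1(1)] unfolding hh_def
    by (simp add: norm_minus_commute)
  have H2: "hh x2 \<ge> (norm (w - x2))\<^sup>2 / 2" using hh_lower[OF mm w P2(1)] unfolding hh_def
    by (simp add: norm_minus_commute)
  have nb: "\<bar>blinfun_apply f (w - x)\<bar> \<le> norm f * norm (w - x)" for f :: "'a \<Rightarrow>\<^sub>L real" and x
    using norm_blinfun[of f "w - x"] by simp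
  have B1: "\<bar>blinfun_apply \<delta> w - blinfun_apply \<delta> x1\<bar> \<le> dd * norm (w - x1)"
    using nb[of \<delta> x1] unfolding dd_def by (simp add: blinfun.diff_right)
  have B2: "\<bar>blinfun_apply \<delta> w - blinfun_apply \<delta> x2\<bar> \<le> dd * norm (w - x2)"
    using nb[of \<delta> x2] unfolding dd_def by (simp add: blinfun.diff_right)
  have As: "blinfun_apply u w - blinfun_apply u x2 \<le> s * norm (w - x2)"
    using nb[of u x2] unfolding s_def by (simp add: blinfun.diff_right)
  have a1B1: "(blinfun_apply u w - blinfun_apply u x1) + (blinfun_apply \<delta> w - blinfun_apply \<delta> x1) \<le> r * norm (w - x1)"
    using nb[of "u + \<delta>" x1] unfolding r_def by (simp add: blinfun.diff_right blinfun.add_left)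
  have rs: "r \<le> s + dd" unfolding r_def s_def dd_def by (rule norm_triangle_ineq)
  have sr: "s \<le> r + dd" unfolding r_def s_def dd_def using norm_triangle_ineq4[of "u + \<delta>" \<delta>] by simp
  have P1w: "\<eta> * ((blinfun_apply u w - blinfun_apply u x1) + (blinfun_apply \<delta> w - blinfun_apply \<delta> x1))
      \<ge> r * (hh x1 + (norm (w - x1))\<^sup>2 / 2)"
  proof -
    have "\<eta> * ((blinfun_apply u w + blinfun_apply \<delta> w) / r)
      \<ge> \<eta> * ((blinfun_apply u x1 + blinfun_apply \<delta> x1) / r) + hh x1 + 1/2 * (norm (w - x1))\<^sup>2"
      using P1(2)[OF w] hw by simp
    then have "r * (\<eta> * ((blinfun_apply u x1 + blinfun_apply \<delta> x1) / r) + hh x1 + 1/2 * (norm (w - x1))\<^sup>2)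
       \<le> r * (\<eta> * ((blinfun_apply u w + blinfun_apply \<delta> w) / r))"
      by (rule mult_left_mono) (use r in simp_all)
    moreover have "r * (\<eta> * ((blinfun_apply u x1 + blinfun_apply \<delta> x1) / r) + hh x1 + 1/2 * (norm (w - x1))\<^sup>2)
       = \<eta> * (blinfun_apply u x1 + blinfun_apply \<delta> x1) + r * hh x1 + r * (1/2 * (norm (w - x1))\<^sup>2)"
      using r by (simp add: field_simps)
    moreover have "r * (\<eta> * ((blinfun_apply u w + blinfun_apply \<delta> w) / r)) = \<eta> * (blinfun_apply u w + blinfun_apply \<delta> w)"
      using r by simp
    ultimately have "\<eta> * (blinfun_apply u x1 + blinfun_apply \<delta> x1) + r * hh x1 + r * (1/2 * (norm (w - x1))\<^sup>2)
       \<le> \<eta> * (blinfun_apply u w + blinfun_apply \<delta> w)" by linarith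
    then show ?thesis by (simp add: algebra_simps)
  qed
  have P2w: "\<eta> * (blinfun_apply u w - blinfun_apply u x2) \<ge> 2 * s * (hh x2 + (norm (w - x2))\<^sup>2 / 2)"
  proof -
    have "\<eta> / 2 * (blinfun_apply u w / s)
      \<ge> \<eta> / 2 * (blinfun_apply u x2 / s) + hh x2 + 1/2 * (norm (w - x2))\<^sup>2"
      using P2(2)[OF w] hw by simp
    then have "(2 * s) * (\<eta> / 2 * (blinfun_apply u x2 / s) + hh x2 + 1/2 * (norm (w - x2))\<^sup>2)
       \<le> (2 * s) * (\<eta> / 2 * (blinfun_apply u w / s))"
      by (rule mult_left_mono) (use s in simp_all)
    moreover have "(2 * s) * (\<eta> / 2 * (blinfun_apply u x2 / s) + hh x2 + 1/2 * (norm (w - x2))\<^sup>2)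
       = \<eta> * blinfun_apply u x2 + 2 * s * (hh x2 + (norm (w - x2))\<^sup>2 / 2)"
      using s by (simp add: field_simps)
    moreover have "(2 * s) * (\<eta> / 2 * (blinfun_apply u w / s)) = \<eta> * blinfun_apply u w"
      using s by simp
    ultimately show ?thesis by (simp add: right_diff_distrib)
  qed
  have P12: "\<eta> * (((blinfun_apply u w - blinfun_apply u x1) + (blinfun_apply \<delta> w - blinfun_apply \<delta> x1))
      - ((blinfun_apply u w - blinfun_apply u x2) + (blinfun_apply \<delta> w - blinfun_apply \<delta> x2))) + r * hh x2 \<ge> r * hh x1"
  proof -
    have "\<eta> * ((blinfun_apply u x2 + blinfun_apply \<delta> x2) / r) + hh x2
      \<ge> \<eta> * ((blinfun_apply u x1 + blinfun_apply \<delta> x1) / r) + hh x1"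
      using P1(2)[OF P2(1)] zero_le_power2[of "norm (x2 - x1)"] by linarith
    then have "r * (\<eta> * ((blinfun_apply u x1 + blinfun_apply \<delta> x1) / r) + hh x1)
       \<le> r * (\<eta> * ((blinfun_apply u x2 + blinfun_apply \<delta> x2) / r) + hh x2)"
      by (rule mult_left_mono) (use r in simp_all)
    moreover have "r * (\<eta> * ((blinfun_apply u x1 + blinfun_apply \<delta> x1) / r) + hh x1)
       = \<eta> * (blinfun_apply u x1 + blinfun_apply \<delta> x1) + r * hh x1"
      using r by (simp add: field_simps)
    moreover have "r * (\<eta> * ((blinfun_apply u x2 + blinfun_apply \<delta> x2) / r) + hh x2)
       = \<eta> * (blinfun_apply u x2 + blinfun_apply \<delta> x2) + r * hh x2"
      using r by (simp add: field_simps)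
    ultimately show ?thesis by (simp add: algebra_simps)
  qed
  have core: "\<eta> * (blinfun_apply u w - blinfun_apply u x1) \<ge> \<eta> * (blinfun_apply u w - blinfun_apply u x2) / 2 - 2 * \<eta>\<^sup>2 * dd"
    by (rule arith_core[OF eta r s _ rs sr _ _ B1 B2 As a1B1 H1 H2 P1w P2w P12]) (auto simp: dd_def)
  have lhs: "blinfun_apply u (prox_grad_map W \<Phi> grad w ((1 / norm (u + \<delta>)) *\<^sub>R (u + \<delta>)) \<eta>)
      = (blinfun_apply u w - blinfun_apply u x1) / \<eta>"
    unfolding prox_grad_map_def x1_def r_def by (simp add: blinfun.scaleR_right blinfun.diff_right)
  have rhs: "blinfun_apply u (prox_grad_map W \<Phi> grad w ((1 / norm u) *\<^sub>R u) (\<eta> / 2))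
      = 2 * (blinfun_apply u w - blinfun_apply u x2) / \<eta>"
    unfolding prox_grad_map_def x2_def s_def by (simp add: blinfun.scaleR_right blinfun.diff_right)
  define a where "a = blinfun_apply u w - blinfun_apply u x1"
  define A where "A = blinfun_apply u w - blinfun_apply u x2"
  have "\<eta> * a \<ge> \<eta> * (A / 2 - 2 * \<eta> * dd)" using core unfolding a_def A_def
    by (simp add: power2_eq_square algebra_simps)
  then have "a \<ge> A / 2 - 2 * \<eta> * dd" using eta by (meson mult_le_cancel_left_pos)
  then have "a / \<eta> \<ge> (A / 2 - 2 * \<eta> * dd) / \<eta>" using eta by (simp add: divide_right_mono)
  also have "(A / 2 - 2 * \<eta> * dd) / \<eta> = 1/4 * (2 * A / \<eta>) - 2 * dd" using eta by (simp add: field_simps)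
  finally have "(blinfun_apply u w - blinfun_apply u x1) / \<eta> \<ge> 1/4 * (2 * (blinfun_apply u w - blinfun_apply u x2) / \<eta>) - 2 * dd"
    unfolding a_def A_def .
  then show ?thesis unfolding lhs rhs dd_def .
qed

end
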